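(* Let $IS\in\{\Box,\blacksquare\}^2$ be any initial store and let $\tau$ be a correct compositional translation from $\mathrm{SYNCSIMPLE}$ into $\mathrm{LOCKSIMPLE}_{2,IS}$ of blocking type $(P_1P_1,P_2P_2)$. Then $\tau(!)$ has no prefix in $T_1^+T_2$ and no prefix in $T_2^+T_1$.
   Context: $\mathrm{SYNCSIMPLE}$: subprocesses $\mathcal{U} ::= \checkmark \mid 0 \mid\, !\mathcal{U} \mid\, ?\mathcal{U}$; processes are finite parallel compositions ($\mid$ associative, commutative, $0$ a unit). Reduction: $!\mathcal{U}_1\mid ?\mathcal{U}_2\mid \mathcal{P}\to \mathcal{U}_1\mid\mathcal{U}_2\mid\mathcal{P}$. Successful: of form $\checkmark\mid\mathcal{P}$; may-convergent: reduces to a successful process; must-convergent: every reachable process is may-convergent. $\mathrm{LOCKSIMPLE}_{k,IS}$ ($IS\in\{\Box,\blacksquare\}^k$, $\Box$ empty, $\blacksquare$ full): subprocesses are words over $\{P_1,T_1,\dots,P_k,T_k\}$ followed by $0$ or $\checkmark$; states $(\mathcal{P},C)$ reduce by $(P_i\mathcal{U}\mid\mathcal{P},C)\to(\mathcal{U}\mid\mathcal{P},C[C_i:=\blacksquare])$ only if $C_i=\Box$, and $(T_i\mathcal{U}\mid\mathcal{P},C)\to(\mathcal{U}\mid\mathcal{P},C[C_i:=\Box])$ always. Success = process contains $\checkmark$; a process $\mathcal{P}$ is may/must-convergent iff the state $(\mathcal{P},IS)$ is. A compositional translation $\tau$ is given by words $\tau(!),\tau(?)$ with $\tau(0)=0$,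 $\tau(\checkmark)=\checkmark$, $\tau(!\mathcal{U})=\tau(!)\tau(\mathcal{U})$, $\tau(?\mathcal{U})=\tau(?)\tau(\mathcal{U})$, $\tau$ commuting with $\mid$; correct = preserves and reflects may- and must-convergence. Blocking type of a word $S$: execute $S$ alone from $IS$; if it gets stuck at an occurrence of $P_i$ that is the first symbol from $\{P_i,T_i\}$ in $S$ the type is $P_i$, if stuck at a later occurrence of $P_i$ the type is $P_iP_i$; $\tau$ has blocking type $(W_1,W_2)$ if $\tau(!)$ has type $W_1$ and $\tau(?)$ type $W_2$. $T_j^+$ denotes nonempty words consisting only of $T_j$. *)

theory Defs
  imports Main "HOL-Library.Multiset"
begin

datatype ssub = SCheck | SZero | SSnd ssub | SRcv ssub

type_synonym sproc = "ssub multiset"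

inductive sync_step :: "sproc \<Rightarrow> sproc \<Rightarrow> bool" where
  "sync_step ({#SSnd u1, SRcv u2#} + P) ({#u1, u2#} + P)"

definition sync_success :: "sproc \<Rightarrow> bool" where
  "sync_success P \<longleftrightarrow> SCheck \<in># P"

definition sync_may :: "sproc \<Rightarrow> bool" where
  "sync_may P \<longleftrightarrow> (\<exists>P'. sync_step\<^sup>*\<^sup>* P P' \<and> sync_success P')"

definition sync_must :: "sproc \<Rightarrow> bool" where
  "sync_must P \<longleftrightarrow> (\<forall>P'. sync_step\<^sup>*\<^sup>* P P' \<longrightarrow> sync_may P')"

text \<open>Lock actions: Pl i = P_i, Tl i = T_i (indices 1..k).  A store is a bool list of
length k; entry i-1 is True iff lock i is full.  A subprocess is a word followed by
0 (False) or the success symbol (True).\<close>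

datatype lact = Pl nat | Tl nat

type_synonym lsub = "lact list \<times> bool"
type_synonym lproc = "lsub multiset"
type_synonym store = "bool list"

definition valid_word :: "nat \<Rightarrow> lact list \<Rightarrow> bool" where
  "valid_word k w \<longleftrightarrow> (\<forall>a\<in>set w. case a of Pl i \<Rightarrow> 1 \<le> i \<and> i \<le> k | Tl i \<Rightarrow> 1 \<le> i \<and> i \<le> k)"

inductive lock_step :: "lproc \<times> store \<Rightarrow> lproc \<times> store \<Rightarrow> bool" where
  lockP: "\<lbrakk>1 \<le> i; i \<le> length C; \<not> C ! (i - 1)\<rbrakk> \<Longrightarrow>
     lock_step ({#(Pl i # w, e)#} + P, C) ({#(w, e)#} + P, C[i - 1 := True])"
| lockT: "\<lbrakk>1 \<le> i; i \<le> length C\<rbrakk> \<Longrightarrow>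
     lock_step ({#(Tl i # w, e)#} + P, C) ({#(w, e)#} + P, C[i - 1 := False])"

definition lock_success :: "lproc \<times> store \<Rightarrow> bool" where
  "lock_success s \<longleftrightarrow> ([], True) \<in># fst s"

definition lock_may :: "lproc \<times> store \<Rightarrow> bool" where
  "lock_may s \<longleftrightarrow> (\<exists>s'. lock_step\<^sup>*\<^sup>* s s' \<and> lock_success s')"

definition lock_must :: "lproc \<times> store \<Rightarrow> bool" where
  "lock_must s \<longleftrightarrow> (\<forall>s'. lock_step\<^sup>*\<^sup>* s s' \<longrightarrow> lock_may s')"

text \<open>A compositional translation is determined by the words w1 = tau(!) and w2 = tau(?).\<close>

fun tr_sub :: "lact list \<Rightarrow> lact list \<Rightarrow> ssub \<Rightarrow> lsub" where
  "tr_sub w1 w2 SCheck = ([], True)"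
| "tr_sub w1 w2 SZero = ([], False)"
| "tr_sub w1 w2 (SSnd u) = (w1 @ fst (tr_sub w1 w2 u), snd (tr_sub w1 w2 u))"
| "tr_sub w1 w2 (SRcv u) = (w2 @ fst (tr_sub w1 w2 u), snd (tr_sub w1 w2 u))"

definition tr_proc :: "lact list \<Rightarrow> lact list \<Rightarrow> sproc \<Rightarrow> lproc" where
  "tr_proc w1 w2 P = image_mset (tr_sub w1 w2) P"

definition correct_translation :: "nat \<Rightarrow> store \<Rightarrow> lact list \<Rightarrow> lact list \<Rightarrow> bool" where
  "correct_translation k IS w1 w2 \<longleftrightarrow>
     valid_word k w1 \<and> valid_word k w2 \<and>
     (\<forall>P. (sync_may P \<longleftrightarrow> lock_may (tr_proc w1 w2 P, IS)) \<and>
          (sync_must P \<longleftrightarrow> lock_must (tr_proc w1 w2 P, IS)))"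

fun run_word :: "store \<Rightarrow> lact list \<Rightarrow> store option" where
  "run_word C [] = Some C"
| "run_word C (Pl i # w) = (if C ! (i - 1) then None else run_word (C[i - 1 := True]) w)"
| "run_word C (Tl i # w) = run_word (C[i - 1 := False]) w"

definition stuck_at :: "store \<Rightarrow> lact list \<Rightarrow> nat \<Rightarrow> nat \<Rightarrow> bool" where
  "stuck_at IS S n i \<longleftrightarrow> n < length S \<and> S ! n = Pl i \<and>
     (\<exists>C. run_word IS (take n S) = Some C \<and> C ! (i - 1))"

datatype btype = BT_P nat | BT_PP nat

definition has_btype :: "store \<Rightarrow> lact list \<Rightarrow> btype \<Rightarrow> bool" where
  "has_btype IS S bt \<longleftrightarrow> (case bt of
     BT_P i \<Rightarrow> (\<exists>n. stuck_at IS S n i \<and> (\<forall>m<n. S ! m \<noteq> Pl i \<and> S ! m \<noteq> Tl i))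
   | BT_PP i \<Rightarrow> (\<exists>n. stuck_at IS S n i \<and> (\<exists>m<n. S ! m = Pl i \<or> S ! m = Tl i)))"

end

theory Submission
  imports Defs
begin

lemma stepP: "1 \<le> i \<Longrightarrow> i \<le> length C \<Longrightarrow> \<not> C ! (i - 1) \<Longrightarrow>
  lock_step (add_mset (Pl i # w, e) Q, C) (add_mset (w, e) Q, C[i - 1 := True])"
  using lockP[of i C w e Q] by simp

lemma stepT: "1 \<le> i \<Longrightarrow> i \<le> length C \<Longrightarrow>
  lock_step (add_mset (Tl i # w, e) Q, C) (add_mset (w, e) Q, C[i - 1 := False])"
  using lockT[of i C w e Q] by simp

lemma may_back: "lock_step\<^sup>*\<^sup>* s s' \<Longrightarrow> lock_may s' \<Longrightarrow> lock_may s"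
  unfolding lock_may_def by (meson rtranclp_trans)

lemma rep_run: "1 \<le> j \<Longrightarrow> j \<le> length C \<Longrightarrow>
  lock_step\<^sup>*\<^sup>* (add_mset (replicate (Suc n) (Tl j) @ w, e) Q, C) (add_mset (w, e) Q, C[j - 1 := False])"
proof (induction n arbitrary: C)
  case 0
  then show ?case using stepT[of j C w e Q] by simp
next
  case (Suc n)
  have "lock_step (add_mset (replicate (Suc (Suc n)) (Tl j) @ w, e) Q, C)
          (add_mset (replicate (Suc n) (Tl j) @ w, e) Q, C[j - 1 := False])"
    using stepT[of j C "replicate (Suc n) (Tl j) @ w" e Q] Suc.prems by simp
  moreover have "lock_step\<^sup>*\<^sup>* (add_mset (replicate (Suc n) (Tl j) @ w, e) Q, C[j - 1 := False])
       (add_mset (w, e) Q, (C[j - 1 := False])[j - 1 := False])"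
    using Suc.IH[of "C[j - 1 := False]"] Suc.prems by simp
  ultimately show ?case by simp
qed

lemma prefix_run:
  assumes "n \<ge> 1" "length C = 2" "{j, k} = {1::nat, 2}"
  shows "lock_step\<^sup>*\<^sup>* (add_mset (replicate n (Tl j) @ [Tl k] @ v, e) Q, C) (add_mset (v, e) Q, [False, False])"
proof -
  obtain n' where n: "n = Suc n'" using assms(1) by (cases n) auto
  have jk: "1 \<le> j" "j \<le> 2" "1 \<le> k" "k \<le> 2" "j \<noteq> k" using assms(3)
    by (auto simp: doubleton_eq_iff)
  have 1: "lock_step\<^sup>*\<^sup>* (add_mset (replicate n (Tl j) @ [Tl k] @ v, e) Q, C)
     (add_mset (Tl k # v, e) Q, C[j - 1 := False])"
    using rep_run[of j C n' "Tl k # v" e Q] n jk assms(2) by simp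
  have 2: "lock_step (add_mset (Tl k # v, e) Q, C[j - 1 := False])
     (add_mset (v, e) Q, (C[j - 1 := False])[k - 1 := False])"
    using stepT[of k "C[j - 1 := False]" v e Q] jk assms(2) by simp
  have 3: "(C[j - 1 := False])[k - 1 := False] = [False, False]"
  proof -
    obtain a b where "C = [a, b]" using assms(2)
      by (metis (no_types) One_nat_def Suc_1 length_0_conv length_Suc_conv)
    then show ?thesis using jk by (cases j; cases k) (auto simp: numeral_2_eq_2 le_Suc_eq)
  qed
  show ?thesis using 1 2 3 by simp
qed

lemma main:
  assumes pre: "\<And>C Q e. length C = 2 \<Longrightarrow>
      lock_step\<^sup>*\<^sup>* (add_mset (w1, e) Q, C) (add_mset (v, e) Q, [False, False])"
  shows "length C = 2 \<Longrightarrow> valid_word 2 w \<Longrightarrow> length w \<le> m \<Longrightarrow>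
    lock_may (add_mset (w, True) (replicate_mset m (w1, False) + R), C)"
proof (induction w arbitrary: C m R)
  case Nil
  then show ?case unfolding lock_may_def lock_success_def by auto
next
  case (Cons a w)
  have vw: "valid_word 2 w" using Cons.prems(2) by (simp add: valid_word_def)
  show ?case
  proof (cases a)
    case (Tl i)
    have i: "1 \<le> i" "i \<le> 2" using Cons.prems(2) Tl by (auto simp: valid_word_def)
    have "lock_step (add_mset (a # w, True) (replicate_mset m (w1, False) + R), C)
       (add_mset (w, True) (replicate_mset m (w1, False) + R), C[i - 1 := False])"
      using stepT[of i C w True] i Cons.prems(1) Tl by simp
    moreover have "lock_may (add_mset (w, True) (replicate_mset m (w1, False) + R), C[i - 1 := False])"
      using Cons.IH[of "C[i - 1 := False]" m R] Cons.prems vw by simp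
    ultimately show ?thesis using may_back by blast
  next
    case (Pl i)
    have i: "1 \<le> i" "i \<le> 2" using Cons.prems(2) Pl by (auto simp: valid_word_def)
    show ?thesis
    proof (cases "C ! (i - 1)")
      case False
      have "lock_step (add_mset (a # w, True) (replicate_mset m (w1, False) + R), C)
         (add_mset (w, True) (replicate_mset m (w1, False) + R), C[i - 1 := True])"
        using stepP[of i C w True] i Cons.prems(1) Pl False by simp
      moreover have "lock_may (add_mset (w, True) (replicate_mset m (w1, False) + R), C[i - 1 := True])"
        using Cons.IH[of "C[i - 1 := True]" m R] Cons.prems vw by simp
      ultimately show ?thesis using may_back by blast
    next
      case True
      obtain m' where m: "m = Suc m'" using Cons.prems(3) by (cases m) auto
      define Q where "Q = add_mset (a # w, True) (replicate_mset m' (w1, False) + R)"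
      have eq: "add_mset (a # w, True) (replicate_mset m (w1, False) + R) = add_mset (w1, False) Q"
        unfolding Q_def m by simp
      have s1: "lock_step\<^sup>*\<^sup>* (add_mset (w1, False) Q, C) (add_mset (v, False) Q, [False, False])"
        using pre Cons.prems(1) by blast
      define Q' where "Q' = replicate_mset m' (w1, False) + add_mset (v, False) R"
      have e2: "add_mset (v, False) Q = add_mset (Pl i # w, True) Q'"
        unfolding Q_def Q'_def Pl by simp
      have nf: "\<not> [False, False] ! (i - 1)" using i by (cases i) (auto simp: nth_Cons')
      have s2: "lock_step (add_mset (Pl i # w, True) Q', [False, False])
          (add_mset (w, True) Q', [False, False][i - 1 := True])"
        by (rule stepP) (use i nf in auto)
      have s1': "lock_step\<^sup>*\<^sup>* (add_mset (w1, False) Q, C) (add_mset (Pl i # w, True) Q', [False, False])"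
        using s1 e2 by simp
      have s3: "lock_may (add_mset (w, True) (replicate_mset m' (w1, False) + add_mset (v, False) R), [False, False][i - 1 := True])"
      proof (rule Cons.IH[OF _ vw])
        show "length ([False, False][i - 1 := True]) = 2" by (subst length_list_update) simp
        show "length w \<le> m'" using Cons.prems(3) m by simp
      qed
      show ?thesis unfolding eq using s1' s2 s3[folded Q'_def] may_back
        by (meson rtranclp.rtrancl_into_rtrancl)
    qed
  qed
qed

lemma sync_no_rcv: "\<forall>x\<in>#P. \<exists>u. x = SSnd u \<Longrightarrow> \<not> sync_step P Q"
  by (auto elim!: sync_step.cases)

lemma sync_not_may:
  assumes "\<forall>x\<in>#P. \<exists>u. x = SSnd u" "SCheck \<notin># P"
  shows "\<not> sync_may ({#SSnd SCheck#} + P)"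
proof
  assume "sync_may ({#SSnd SCheck#} + P)"
  then obtain P' where "sync_step\<^sup>*\<^sup>* ({#SSnd SCheck#} + P) P'" "sync_success P'"
    unfolding sync_may_def by blast
  moreover have "\<forall>x\<in>#{#SSnd SCheck#} + P. \<exists>u. x = SSnd u" using assms by auto
  moreover have "sync_step\<^sup>*\<^sup>* X Y \<Longrightarrow> \<forall>x\<in>#X. \<exists>u. x = SSnd u \<Longrightarrow> Y = X" for X Y
    by (induction rule: converse_rtranclp_induct) (auto dest: sync_no_rcv)
  ultimately have "P' = {#SSnd SCheck#} + P" by blast
  then show False using \<open>sync_success P'\<close> assms by (simp add: sync_success_def)
qed

lemma no_prefix:
  assumes ct: "correct_translation 2 IS w1 w2" and len: "length IS = 2"
    and n: "n \<ge> 1" and jk: "{j, k} = {1::nat, 2}"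
    and w1: "w1 = replicate n (Tl j) @ [Tl k] @ v"
  shows False
proof -
  define m where "m = length w1"
  define P where "P = replicate_mset m (SSnd SZero)"
  have "\<not> sync_may ({#SSnd SCheck#} + P)"
    by (rule sync_not_may) (auto simp: P_def)
  moreover have "tr_proc w1 w2 ({#SSnd SCheck#} + P) = add_mset (w1, True) (replicate_mset m (w1, False) + {#})"
    by (simp add: tr_proc_def P_def)
  moreover have "lock_may (add_mset (w1, True) (replicate_mset m (w1, False) + {#}), IS)"
  proof (rule main)
    show "\<And>C Q e. length C = 2 \<Longrightarrow>
      lock_step\<^sup>*\<^sup>* (add_mset (w1, e) Q, C) (add_mset (v, e) Q, [False, False])"
      using prefix_run[OF n _ jk] w1 by simp
    show "length IS = 2" by fact
    show "valid_word 2 w1" using ct by (simp add: correct_translation_def)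
    show "length w1 \<le> m" by (simp add: m_def)
  qed
  ultimately show False using ct unfolding correct_translation_def by metis
qed

theorem lemma5p3:
  fixes IS :: "bool list" and w1 w2 :: "lact list"
  assumes "length IS = 2"
    and "correct_translation 2 IS w1 w2"
    and "has_btype IS w1 (BT_PP 1)"
    and "has_btype IS w2 (BT_PP 2)"
  shows "\<not> (\<exists>n v. n \<ge> 1 \<and> w1 = replicate n (Tl 1) @ [Tl 2] @ v)
       \<and> \<not> (\<exists>n v. n \<ge> 1 \<and> w1 = replicate n (Tl 2) @ [Tl 1] @ v)"
  using no_prefix[OF assms(2,1), of _ 1 2] no_prefix[OF assms(2,1), of _ 2 1]
  by (auto simp: insert_commute)

end
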